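(* Let $G$ be a nilpotent group such that $G/Z(G)$ contains a nontrivial divisible subgroup. Then $G$ contains a nontrivial divisible subgroup.
   Context: $Z(G)$ denotes the center of $G$. A group is divisible if every element has an $n$-th root in it for every integer $n\ge1$. *)

theory Defs
  imports "HOL-Algebra.Algebra"
begin

definition center :: "('a, 'b) monoid_scheme \<Rightarrow> 'a set" where
  "center G = {z \<in> carrier G. \<forall>x \<in> carrier G. z \<otimes>\<^bsub>G\<^esub> x = x \<otimes>\<^bsub>G\<^esub> z}"

definition commutators :: "('a, 'b) monoid_scheme \<Rightarrow> 'a set \<Rightarrow> 'a set \<Rightarrow> 'a set" where
  "commutators G H K = {x \<otimes>\<^bsub>G\<^esub> y \<otimes>\<^bsub>G\<^esub> inv\<^bsub>G\<^esub> x \<otimes>\<^bsub>G\<^esub> inv\<^bsub>G\<^esub> y | x y. x \<in> H \<and> y \<in> K}"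

fun lower_central :: "('a, 'b) monoid_scheme \<Rightarrow> nat \<Rightarrow> 'a set" where
  "lower_central G 0 = carrier G"
| "lower_central G (Suc n) = generate G (commutators G (lower_central G n) (carrier G))"

definition nilpotent :: "('a, 'b) monoid_scheme \<Rightarrow> bool" where
  "nilpotent G \<longleftrightarrow> group G \<and> (\<exists>n. lower_central G n = {\<one>\<^bsub>G\<^esub>})"

definition divisible_subgroup :: "'a set \<Rightarrow> ('a, 'b) monoid_scheme \<Rightarrow> bool" where
  "divisible_subgroup H G \<longleftrightarrow> subgroup H G \<and>
     (\<forall>h \<in> H. \<forall>n::nat. n \<ge> 1 \<longrightarrow> (\<exists>r \<in> H. r [^]\<^bsub>G\<^esub> n = h))"

end

theory Submission
  imports Defs
begin

lemma (in group) center_normal: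
  shows "center G \<lhd> G"
proof -
  have sg: "subgroup (center G) G"
  proof (rule subgroupI)
    show "center G \<subseteq> carrier G" unfolding center_def by auto
    show "center G \<noteq> {}" unfolding center_def by (auto intro!: exI[of _ \<one>])
    fix a b assume a: "a \<in> center G" and b: "b \<in> center G"
    show "inv a \<in> center G" unfolding center_def
    proof (intro CollectI conjI ballI)
      have ac: "a \<in> carrier G" using a unfolding center_def by auto
      then show "inv a \<in> carrier G" by simp
      fix x assume x: "x \<in> carrier G"
      have "a \<otimes> x = x \<otimes> a" using a x unfolding center_def by auto
      then have "inv a \<otimes> (a \<otimes> x) \<otimes> inv a = inv a \<otimes> (x \<otimes> a) \<otimes> inv a" by simp
      then have "a \<otimes> (x \<otimes> inv a) = x" using ac x by (simp add: m_assoc)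
      then have "inv a \<otimes> (a \<otimes> (x \<otimes> inv a)) = inv a \<otimes> x" by simp
      then show "inv a \<otimes> x = x \<otimes> inv a" using ac x by (metis l_inv l_one m_assoc inv_closed m_closed)
    qed
    show "a \<otimes> b \<in> center G" unfolding center_def
    proof (intro CollectI conjI ballI)
      have ac: "a \<in> carrier G" "b \<in> carrier G" using a b unfolding center_def by auto
      then show "a \<otimes> b \<in> carrier G" by simp
      fix x assume x: "x \<in> carrier G"
      have 1: "a \<otimes> x = x \<otimes> a" "b \<otimes> x = x \<otimes> b" using a b x unfolding center_def by auto
      have "a \<otimes> b \<otimes> x = a \<otimes> (b \<otimes> x)" using ac x by (simp add: m_assoc)
      also have "\<dots> = a \<otimes> (x \<otimes> b)" using 1 by simp
      also have "\<dots> = (a \<otimes> x) \<otimes> b" using ac x by (simp add: m_assoc)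
      also have "\<dots> = (x \<otimes> a) \<otimes> b" using 1 by simp
      also have "\<dots> = x \<otimes> (a \<otimes> b)" using ac x by (simp add: m_assoc)
      finally show "a \<otimes> b \<otimes> x = x \<otimes> (a \<otimes> b)" .
    qed
  qed
  show ?thesis
  proof (rule normal_invI[OF sg])
    fix x h assume "x \<in> carrier G" "h \<in> center G"
    then have "h \<otimes> x = x \<otimes> h" "h \<in> carrier G" unfolding center_def by auto
    then have "x \<otimes> h \<otimes> inv x = h" using \<open>x \<in> carrier G\<close> by (metis m_assoc r_inv r_one inv_closed)
    then show "x \<otimes> h \<otimes> inv x \<in> center G" using \<open>h \<in> center G\<close> by simp
  qed
qed

lemma lower_central_sub: "group G \<Longrightarrow> lower_central G n \<subseteq> carrier G"
proof (induction n)
  case 0 then show ?case by simp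
next
  case (Suc n)
  have "commutators G (lower_central G n) (carrier G) \<subseteq> carrier G"
    using Suc unfolding commutators_def by (auto intro!: group.subgroupE monoid.m_closed group.is_monoid group.inv_closed)
  then show ?case using group.generate_is_subgroup[OF Suc.prems] subgroup.subset by simp blast
qed



lemma (in group) cancel_aux [simp]:
  "x \<in> carrier G \<Longrightarrow> y \<in> carrier G \<Longrightarrow> inv x \<otimes> (x \<otimes> y) = y"
  "x \<in> carrier G \<Longrightarrow> y \<in> carrier G \<Longrightarrow> x \<otimes> (inv x \<otimes> y) = y"
  by (simp_all add: m_assoc[symmetric])

lemma (in group) main_aux:
  assumes nil: "lower_central G N = {\<one>}"
    and Hd: "divisible_subgroup H (G Mod center G)" and Hn: "H \<noteq> {center G}"
  shows "\<exists>D. divisible_subgroup D G \<and> D \<noteq> {\<one>}"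
proof -
  define Z where "Z = center G"
  interpret N: normal Z G using center_normal Z_def by simp
  interpret Q: group "G Mod Z" by (rule N.factorgroup_is_group)
  interpret h: group_hom G "G Mod Z" "\<lambda>a. Z #> a"
    by (simp add: group_hom_def group_hom_axioms_def is_group Q.is_group N.r_coset_hom_Mod)
  have HS: "subgroup H (G Mod Z)" using Hd unfolding divisible_subgroup_def Z_def by simp
  have ZH: "Z \<in> H" using subgroup.one_closed[OF HS] by simp
  obtain C where C: "C \<in> H" "C \<noteq> Z" using Hn ZH subgroup.subset[OF HS] Z_def by blast
  have "C \<in> carrier (G Mod Z)" using C subgroup.subset[OF HS] by blast
  then obtain x1 where x1: "x1 \<in> carrier G" "C = Z #> x1" by (auto simp: carrier_FactGroup)
  define K where "K = {x \<in> carrier G. Z #> x \<in> H}"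
  have x1K: "x1 \<in> K" using x1 C K_def by simp
  have "x1 \<notin> Z" using x1 C N.rcos_const[OF is_group] by auto
  then obtain y1 where y1: "y1 \<in> carrier G" "x1 \<otimes> y1 \<noteq> y1 \<otimes> x1"
    using x1 unfolding Z_def center_def by auto
  have Kc: "K \<subseteq> carrier G" unfolding K_def by auto
  define P where "P n = (\<forall>x\<in>K. \<forall>g\<in>lower_central G n. x \<otimes> g = g \<otimes> x)" for n
  have nP0: "\<not> P 0" unfolding P_def using x1K y1 by auto
  have PN: "P N" unfolding P_def nil using Kc by auto
  have "\<exists>i. \<not> P i \<and> P (Suc i)"
  proof (rule ccontr)
    assume a: "\<not> ?thesis"
    have "\<not> P n" for n by (induction n) (use nP0 a in auto)
    with PN show False by blast
  qed
  then obtain i where i: "\<not> P i" "P (Suc i)" by blast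
  then obtain x0 g where x0: "x0 \<in> K" and g: "g \<in> lower_central G i" and x0g: "x0 \<otimes> g \<noteq> g \<otimes> x0"
    unfolding P_def by auto
  have gc: "g \<in> carrier G" using g lower_central_sub[OF is_group] by blast
  define \<phi> where "\<phi> x = x \<otimes> g \<otimes> inv x \<otimes> inv g" for x
  have \<phi>c: "\<phi> x \<in> carrier G" if "x \<in> carrier G" for x using that gc by (simp add: \<phi>_def)
  have A: "\<phi> y \<in> lower_central G (Suc i)" if y: "y \<in> carrier G" for y
  proof -
    have sub: "commutators G (lower_central G i) (carrier G) \<subseteq> carrier G"
      using lower_central_sub[OF is_group, of "Suc i"] lower_central_sub[OF is_group, of i]
      unfolding commutators_def by auto
    have sg: "subgroup (lower_central G (Suc i)) G" using generate_is_subgroup[OF sub] by simp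
    have "g \<otimes> y \<otimes> inv g \<otimes> inv y \<in> commutators G (lower_central G i) (carrier G)"
      unfolding commutators_def using g y by blast
    then have "g \<otimes> y \<otimes> inv g \<otimes> inv y \<in> lower_central G (Suc i)" by (simp add: generate.incl)
    moreover have "inv (g \<otimes> y \<otimes> inv g \<otimes> inv y) = \<phi> y"
      using y gc by (simp add: \<phi>_def inv_mult_group m_assoc)
    ultimately show ?thesis using subgroup.m_inv_closed[OF sg] by metis
  qed
  have B: "\<phi> (x \<otimes> y) = \<phi> y \<otimes> \<phi> x" if x: "x \<in> K" and y: "y \<in> carrier G" for x y
  proof -
    have xc: "x \<in> carrier G" using x Kc by blast
    have e: "x \<otimes> \<phi> y = \<phi> y \<otimes> x" using i(2) x A[OF y] unfolding P_def by blast
    have "\<phi> y \<otimes> \<phi> x = (\<phi> y \<otimes> x) \<otimes> (g \<otimes> inv x \<otimes> inv g)"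
      using xc y gc by (simp add: \<phi>_def m_assoc)
    also have "\<dots> = (x \<otimes> \<phi> y) \<otimes> (g \<otimes> inv x \<otimes> inv g)" using e by simp
    also have "\<dots> = \<phi> (x \<otimes> y)"
      using xc y gc by (simp add: \<phi>_def m_assoc inv_mult_group)
    finally show ?thesis by simp
  qed
  have Cz: "\<phi> (z \<otimes> x) = \<phi> x" if z: "z \<in> Z" and x: "x \<in> carrier G" for z x
  proof -
    have zc: "z \<in> carrier G" using z N.subset by blast
    have w: "x \<otimes> g \<otimes> inv x \<in> carrier G" using x gc by simp
    have "z \<otimes> (x \<otimes> g \<otimes> inv x) = (x \<otimes> g \<otimes> inv x) \<otimes> z"
      using z w unfolding Z_def center_def by blast
    moreover have "\<phi> (z \<otimes> x) = (z \<otimes> (x \<otimes> g \<otimes> inv x)) \<otimes> inv z \<otimes> inv g"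
      using zc x gc by (simp add: \<phi>_def m_assoc inv_mult_group)
    ultimately have "\<phi> (z \<otimes> x) = ((x \<otimes> g \<otimes> inv x) \<otimes> z) \<otimes> inv z \<otimes> inv g" by simp
    also have "\<dots> = \<phi> x" using zc x gc by (simp add: \<phi>_def m_assoc)
    finally show ?thesis .
  qed
  have \<phi>1: "\<phi> \<one> = \<one>" using gc by (simp add: \<phi>_def)
  have pow: "\<phi> (r [^] n) = \<phi> r [^] n" if r: "r \<in> K" for r and n :: nat
  proof (induction n)
    case 0 then show ?case using \<phi>1 by simp
  next
    case (Suc n)
    have rc: "r \<in> carrier G" using r Kc by blast
    have "\<phi> (r [^] Suc n) = \<phi> (r \<otimes> r [^] n)" using rc nat_pow_Suc2 by simp
    also have "\<dots> = \<phi> (r [^] n) \<otimes> \<phi> r" using B[OF r] rc by simp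
    finally show ?case using Suc by simp
  qed
  have Kmul: "x \<otimes> y \<in> K" if xy: "x \<in> K" "y \<in> K" for x y
  proof -
    have xc: "x \<in> carrier G" "y \<in> carrier G" using xy Kc by auto
    have "Z #> (x \<otimes> y) = (Z #> x) \<otimes>\<^bsub>G Mod Z\<^esub> (Z #> y)" using h.hom_mult xc by blast
    moreover have "(Z #> x) \<otimes>\<^bsub>G Mod Z\<^esub> (Z #> y) \<in> H"
      using subgroup.m_closed[OF HS] xy unfolding K_def by blast
    ultimately show ?thesis using xc unfolding K_def by simp
  qed
  have Kinv: "inv x \<in> K" if "x \<in> K" for x
  proof -
    have "Z #> inv x = inv\<^bsub>G Mod Z\<^esub> (Z #> x)" using that Kc h.hom_inv by blast
    moreover have "inv\<^bsub>G Mod Z\<^esub> (Z #> x) \<in> H" using that subgroup.m_inv_closed[OF HS] unfolding K_def by blast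
    ultimately show ?thesis using that Kc unfolding K_def by auto
  qed
  have K1: "\<one> \<in> K" unfolding K_def using ZH N.rcos_const[OF is_group] by simp
  define D where "D = \<phi> ` K"
  have Dsg: "subgroup D G"
  proof (rule subgroupI)
    show "D \<subseteq> carrier G" unfolding D_def using \<phi>c Kc by blast
    show "D \<noteq> {}" unfolding D_def using K1 by blast
    fix a b assume a: "a \<in> D" and b: "b \<in> D"
    then obtain x y where xy: "x \<in> K" "y \<in> K" "a = \<phi> x" "b = \<phi> y" unfolding D_def by blast
    have xc: "x \<in> carrier G" "y \<in> carrier G" using xy Kc by auto
    have "\<phi> (inv x) \<otimes> \<phi> x = \<one>" using B[OF xy(1), of "inv x"] xc \<phi>1 by simp
    then have "inv a = \<phi> (inv x)" using xy xc \<phi>c by (simp add: inv_equality)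
    then show "inv a \<in> D" unfolding D_def using Kinv xy by blast
    have "a \<otimes> b = \<phi> (y \<otimes> x)" using B[OF xy(2) xc(1)] xy by simp
    then show "a \<otimes> b \<in> D" unfolding D_def using Kmul xy by blast
  qed
  have Ddiv: "\<exists>r\<in>D. r [^] n = d" if d: "d \<in> D" and n: "n \<ge> 1" for d and n :: nat
  proof -
    obtain x where x: "x \<in> K" "d = \<phi> x" using d unfolding D_def by blast
    have xc: "x \<in> carrier G" using x Kc by blast
    have "Z #> x \<in> H" using x K_def by simp
    then obtain R where R: "R \<in> H" "R [^]\<^bsub>G Mod Z\<^esub> n = Z #> x"
      using Hd n unfolding divisible_subgroup_def Z_def by blast
    have "R \<in> carrier (G Mod Z)" using R subgroup.subset[OF HS] by blast
    then obtain r where r: "r \<in> carrier G" "R = Z #> r" by (auto simp: carrier_FactGroup)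
    have rK: "r \<in> K" using r R K_def by simp
    have "Z #> (r [^] n) = Z #> x" using R r N.FactGroup_pow by simp
    moreover have "r [^] n \<in> Z #> (r [^] n)" using r rcos_self N.subgroup_axioms by simp
    ultimately obtain z where z: "z \<in> Z" "r [^] n = z \<otimes> x" unfolding r_coset_def by auto
    have "\<phi> r [^] n = \<phi> (r [^] n)" using pow[OF rK] by simp
    also have "\<dots> = \<phi> (z \<otimes> x)" using z by simp
    also have "\<dots> = d" using Cz[OF z(1) xc] x by simp
    finally have "\<phi> r [^] n = d" .
    then show ?thesis using rK D_def by blast
  qed
  have "\<phi> x0 \<noteq> \<one>"
  proof
    assume "\<phi> x0 = \<one>"
    moreover have x0c: "x0 \<in> carrier G" using x0 Kc by blast
    ultimately have "x0 \<otimes> g \<otimes> inv x0 = g" using gc by (simp add: \<phi>_def inv_solve_right')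
    then have "x0 \<otimes> g = g \<otimes> x0" using x0c gc by (metis inv_solve_right' m_closed)
    with x0g show False by blast
  qed
  then have "D \<noteq> {\<one>}" using x0 D_def by blast
  then show ?thesis using Dsg Ddiv unfolding divisible_subgroup_def by blast
qed

theorem mainTheorem3:
  assumes "group G"
    and "nilpotent G"
    and "\<exists>H. divisible_subgroup H (G Mod center G) \<and> H \<noteq> {\<one>\<^bsub>G Mod center G\<^esub>}"
  shows "\<exists>D. divisible_subgroup D G \<and> D \<noteq> {\<one>\<^bsub>G\<^esub>}"
proof -
  obtain N where "lower_central G N = {\<one>\<^bsub>G\<^esub>}" using assms(2) unfolding nilpotent_def by blast
  moreover obtain H where "divisible_subgroup H (G Mod center G)" "H \<noteq> {center G}"
    using assms(3) by auto
  ultimately show ?thesis using group.main_aux[OF assms(1)] by blast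
qed

end
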